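(* Let $(A,B)$ be a finite-dimensional associative superalgebra over an algebraically closed field $\mathbb{K}$ of characteristic zero endowed with a homogeneous symmetric structure $B$, and let $I$ be a minimal graded two-sided ideal of $A$. Then either $I$ is simple, or $I$ has null product and $AI=I=IA$, or $I=\mathbb{K}x$ where $x$ is a homogeneous element of $\mathrm{Ann}(A)$.
   Context: A superalgebra is $\mathbb{Z}_2$-graded, $A=A_{\bar 0}\oplus A_{\bar 1}$, $A_\alpha A_\beta\subseteq A_{\alpha+\beta}$. A homogeneous symmetric structure on $A$ is a bilinear form $B$ which is either even ($B(A_{\bar 0},A_{\bar 1})=0$) or odd ($B(A_{\bar 0},A_{\bar 0})=B(A_{\bar 1},A_{\bar 1})=0$), and is supersymmetric ($B(x,y)=(-1)^{|x||y|}B(y,x)$ for homogeneous $x,y$), associative ($B(xy,z)=B(x,yz)$) and non-degenerate. A graded two-sided ideal $I$ is minimal if $I\notin\{\{0\},A\}$ and every graded two-sided ideal of $A$ contained in $I$ is $\{0\}$ or $I$. A superalgebra is simple if its product is non-zero and its only graded two-sided ideals are $\{0\}$ and itself. $\mathrm{Ann}(A)=\{x\in A: xA=Ax=\{0\}\}$. *)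

theory Defs
  imports Main "HOL-Computational_Algebra.Polynomial"
begin

definition algebraically_closed :: "('k::field) itself \<Rightarrow> bool" where
  "algebraically_closed _ \<longleftrightarrow> (\<forall>p::'k poly. 0 < degree p \<longrightarrow> (\<exists>x. poly p x = 0))"

text \<open>A finite-dimensional associative superalgebra: the whole type 'v is the
  underlying K-vector space (scalar multiplication scale), mul is the product,
  A0 and A1 are the even and odd parts.\<close>
definition fd_assoc_superalgebra ::
  "('k::field \<Rightarrow> 'v::ab_group_add \<Rightarrow> 'v) \<Rightarrow> ('v \<Rightarrow> 'v \<Rightarrow> 'v) \<Rightarrow> 'v set \<Rightarrow> 'v set \<Rightarrow> bool" where
  "fd_assoc_superalgebra scale mul A0 A1 \<longleftrightarrow>
     vector_space scale \<and>
     (\<exists>S. finite S \<and> module.span scale S = UNIV) \<and>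
     (\<forall>x y z. mul (x + y) z = mul x z + mul y z) \<and>
     (\<forall>x y z. mul x (y + z) = mul x y + mul x z) \<and>
     (\<forall>c x y. mul (scale c x) y = scale c (mul x y)) \<and>
     (\<forall>c x y. mul x (scale c y) = scale c (mul x y)) \<and>
     (\<forall>x y z. mul (mul x y) z = mul x (mul y z)) \<and>
     module.subspace scale A0 \<and> module.subspace scale A1 \<and>
     A0 \<inter> A1 = {0} \<and> (\<forall>v. \<exists>a\<in>A0. \<exists>b\<in>A1. v = a + b) \<and>
     (\<forall>x\<in>A0. \<forall>y\<in>A0. mul x y \<in> A0) \<and>
     (\<forall>x\<in>A0. \<forall>y\<in>A1. mul x y \<in> A1) \<and>
     (\<forall>x\<in>A1. \<forall>y\<in>A0. mul x y \<in> A1) \<and>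
     (\<forall>x\<in>A1. \<forall>y\<in>A1. mul x y \<in> A0)"

definition homogeneous_symmetric_structure ::
  "('k::field \<Rightarrow> 'v::ab_group_add \<Rightarrow> 'v) \<Rightarrow> ('v \<Rightarrow> 'v \<Rightarrow> 'v) \<Rightarrow> 'v set \<Rightarrow> 'v set
     \<Rightarrow> ('v \<Rightarrow> 'v \<Rightarrow> 'k) \<Rightarrow> bool" where
  "homogeneous_symmetric_structure scale mul A0 A1 B \<longleftrightarrow>
     (\<forall>x y z. B (x + y) z = B x z + B y z) \<and>
     (\<forall>x y z. B x (y + z) = B x y + B x z) \<and>
     (\<forall>c x y. B (scale c x) y = c * B x y) \<and>
     (\<forall>c x y. B x (scale c y) = c * B x y) \<and>
     ((\<forall>x\<in>A0. \<forall>y\<in>A1. B x y = 0) \<or>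
      ((\<forall>x\<in>A0. \<forall>y\<in>A0. B x y = 0) \<and> (\<forall>x\<in>A1. \<forall>y\<in>A1. B x y = 0))) \<and>
     (\<forall>x\<in>A0. \<forall>y\<in>A0. B x y = B y x) \<and>
     (\<forall>x\<in>A0. \<forall>y\<in>A1. B x y = B y x) \<and>
     (\<forall>x\<in>A1. \<forall>y\<in>A0. B x y = B y x) \<and>
     (\<forall>x\<in>A1. \<forall>y\<in>A1. B x y = - B y x) \<and>
     (\<forall>x y z. B (mul x y) z = B x (mul y z)) \<and>
     (\<forall>x. (\<forall>y. B x y = 0) \<longrightarrow> x = 0) \<and>
     (\<forall>y. (\<forall>x. B x y = 0) \<longrightarrow> y = 0)"

definition graded_ideal_in ::
  "('k::field \<Rightarrow> 'v::ab_group_add \<Rightarrow> 'v) \<Rightarrow> ('v \<Rightarrow> 'v \<Rightarrow> 'v) \<Rightarrow> 'v set \<Rightarrow> 'v set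
     \<Rightarrow> 'v set \<Rightarrow> 'v set \<Rightarrow> bool" where
  "graded_ideal_in scale mul A0 A1 S J \<longleftrightarrow>
     J \<subseteq> S \<and> module.subspace scale J \<and>
     (\<forall>x\<in>J. \<exists>a\<in>J \<inter> A0. \<exists>b\<in>J \<inter> A1. x = a + b) \<and>
     (\<forall>a\<in>S. \<forall>x\<in>J. mul a x \<in> J \<and> mul x a \<in> J)"

abbreviation graded_ideal where
  "graded_ideal scale mul A0 A1 J \<equiv> graded_ideal_in scale mul A0 A1 UNIV J"

definition minimal_graded_ideal ::
  "('k::field \<Rightarrow> 'v::ab_group_add \<Rightarrow> 'v) \<Rightarrow> ('v \<Rightarrow> 'v \<Rightarrow> 'v) \<Rightarrow> 'v set \<Rightarrow> 'v set
     \<Rightarrow> 'v set \<Rightarrow> bool" where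
  "minimal_graded_ideal scale mul A0 A1 I \<longleftrightarrow>
     graded_ideal scale mul A0 A1 I \<and> I \<noteq> {0} \<and> I \<noteq> UNIV \<and>
     (\<forall>J. graded_ideal scale mul A0 A1 J \<and> J \<subseteq> I \<longrightarrow> J = {0} \<or> J = I)"

definition simple_sub ::
  "('k::field \<Rightarrow> 'v::ab_group_add \<Rightarrow> 'v) \<Rightarrow> ('v \<Rightarrow> 'v \<Rightarrow> 'v) \<Rightarrow> 'v set \<Rightarrow> 'v set
     \<Rightarrow> 'v set \<Rightarrow> bool" where
  "simple_sub scale mul A0 A1 I \<longleftrightarrow>
     (\<exists>x\<in>I. \<exists>y\<in>I. mul x y \<noteq> 0) \<and>
     (\<forall>J. graded_ideal_in scale mul A0 A1 I J \<longrightarrow> J = {0} \<or> J = I)"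

definition annihilator :: "('v::zero \<Rightarrow> 'v \<Rightarrow> 'v) \<Rightarrow> 'v set" where
  "annihilator mul = {x. \<forall>a. mul x a = 0 \<and> mul a x = 0}"

end

theory Submission imports Defs begin

locale SA =
  fixes scale :: "'k::field \<Rightarrow> 'v::ab_group_add \<Rightarrow> 'v" and mul :: "'v \<Rightarrow> 'v \<Rightarrow> 'v"
    and A0 A1 :: "'v set"
  assumes fd: "fd_assoc_superalgebra scale mul A0 A1"
begin

sublocale vector_space scale using fd by (simp add: fd_assoc_superalgebra_def)

lemma addL: "mul (x+y) z = mul x z + mul y z" using fd by (simp add: fd_assoc_superalgebra_def)
lemma addR: "mul x (y+z) = mul x y + mul x z" using fd by (simp add: fd_assoc_superalgebra_def)
lemma scL: "mul (scale c x) y = scale c (mul x y)" using fd by (simp add: fd_assoc_superalgebra_def)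
lemma scR: "mul x (scale c y) = scale c (mul x y)" using fd by (simp add: fd_assoc_superalgebra_def)
lemma assoc: "mul (mul x y) z = mul x (mul y z)" using fd by (simp add: fd_assoc_superalgebra_def)
lemma sub0: "subspace A0" using fd by (simp add: fd_assoc_superalgebra_def)
lemma sub1: "subspace A1" using fd by (simp add: fd_assoc_superalgebra_def)
lemma dec: "\<exists>a\<in>A0. \<exists>b\<in>A1. v = a + b" using fd by (simp add: fd_assoc_superalgebra_def)
lemma mul0L[simp]: "mul 0 x = 0"
proof -
  have "mul 0 x = mul 0 x + mul 0 x" using addL[of 0 0 x] by simp
  thus ?thesis by simp
qed
lemma mul0R[simp]: "mul x 0 = 0"
proof -
  have "mul x 0 = mul x 0 + mul x 0" using addR[of x 0 0] by simp
  thus ?thesis by simp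
qed

abbreviation "H \<equiv> A0 \<union> A1"

lemma hom_mul: "x \<in> H \<Longrightarrow> y \<in> H \<Longrightarrow> mul x y \<in> H"
  using fd unfolding fd_assoc_superalgebra_def by blast

lemma span_pre:
  assumes "x \<in> span G" "subspace J" "\<And>x y. f (x+y) = f x + f y"
    "\<And>c x. f (scale c x) = scale c (f x)" "\<And>g. g \<in> G \<Longrightarrow> f g \<in> J"
  shows "f x \<in> J"
proof -
  have f0: "f 0 = 0" using assms(3)[of 0 0] by simp
  have "subspace {y. f y \<in> J}" using assms(2-4) f0 unfolding subspace_def by auto
  hence "span G \<subseteq> {y. f y \<in> J}" using assms(5) by (intro span_minimal) auto
  thus ?thesis using assms(1) by auto
qed

lemma graded_span:
  assumes "\<And>g. g \<in> G \<Longrightarrow> g \<in> span (G \<inter> H)" "v \<in> span G"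
  shows "\<exists>p\<in>span G \<inter> A0. \<exists>q\<in>span G \<inter> A1. v = p + q"
proof -
  have "span G \<subseteq> span (G \<inter> H)" using assms(1) by (intro span_minimal) auto
  hence "v \<in> span ((G \<inter> A0) \<union> (G \<inter> A1))" using assms(2) by (auto simp: Int_Un_distrib)
  then obtain p q where pq: "v = p + q" "p \<in> span (G \<inter> A0)" "q \<in> span (G \<inter> A1)"
    unfolding span_Un by blast
  have "span (G \<inter> A0) \<subseteq> A0" by (rule span_minimal) (auto simp: sub0)
  moreover have "span (G \<inter> A1) \<subseteq> A1" by (rule span_minimal) (auto simp: sub1)
  moreover have "span (G \<inter> A0) \<subseteq> span G" "span (G \<inter> A1) \<subseteq> span G" by (simp_all add: span_mono)
  ultimately show ?thesis using pq by blast
qed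

lemma gen_ideal:
  assumes "\<And>g a. g \<in> G \<Longrightarrow> mul a g \<in> span G" "\<And>g a. g \<in> G \<Longrightarrow> mul g a \<in> span G"
    "\<And>g. g \<in> G \<Longrightarrow> g \<in> span (G \<inter> H)"
  shows "graded_ideal scale mul A0 A1 (span G)"
  unfolding graded_ideal_in_def
proof (intro conjI ballI)
  fix x assume "x \<in> span G"
  thus "\<exists>a\<in>span G \<inter> A0. \<exists>b\<in>span G \<inter> A1. x = a + b" using graded_span assms(3) by blast
next
  fix a x assume x: "x \<in> span G"
  show "mul a x \<in> span G"
    by (rule span_pre[OF x, of _ "mul a"]) (auto simp: addR scR assms(1))
  show "mul x a \<in> span G"
    by (rule span_pre[OF x, of _ "\<lambda>x. mul x a"]) (auto simp: addL scL assms(2))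
qed auto

lemma min_use:
  assumes "minimal_graded_ideal scale mul A0 A1 I" "G \<subseteq> I"
    "\<And>g a. g \<in> G \<Longrightarrow> mul a g \<in> span G" "\<And>g a. g \<in> G \<Longrightarrow> mul g a \<in> span G"
    "\<And>g. g \<in> G \<Longrightarrow> g \<in> span (G \<inter> H)"
  shows "span G = {0} \<or> span G = I"
proof -
  have "subspace I" using assms(1) by (simp add: minimal_graded_ideal_def graded_ideal_in_def)
  hence "span G \<subseteq> I" using assms(2) by (intro span_minimal)
  thus ?thesis using assms(1) gen_ideal[OF assms(3-5)] unfolding minimal_graded_ideal_def by blast
qed

lemma inGH: "t \<in> G \<Longrightarrow> t \<in> H \<Longrightarrow> t \<in> span (G \<inter> H)"
  by (auto intro: span_base)

end


theorem mainTheorem8: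
  fixes scale :: "'k::field_char_0 \<Rightarrow> 'v::ab_group_add \<Rightarrow> 'v"
    and mul :: "'v \<Rightarrow> 'v \<Rightarrow> 'v"
    and A0 A1 I :: "'v set"
    and B :: "'v \<Rightarrow> 'v \<Rightarrow> 'k"
  assumes "algebraically_closed TYPE('k)"
    and "fd_assoc_superalgebra scale mul A0 A1"
    and "homogeneous_symmetric_structure scale mul A0 A1 B"
    and "minimal_graded_ideal scale mul A0 A1 I"
  shows "simple_sub scale mul A0 A1 I
     \<or> ((\<forall>x\<in>I. \<forall>y\<in>I. mul x y = 0) \<and>
        module.span scale {mul a x | a x. x \<in> I} = I \<and>
        I = module.span scale {mul x a | a x. x \<in> I})
     \<or> (\<exists>x. (x \<in> A0 \<or> x \<in> A1) \<and> x \<in> annihilator mul \<and> I = range (\<lambda>c. scale c x))"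
proof -
  interpret SA scale mul A0 A1 using assms(2) by unfold_locales
  note M = assms(4)
  have Isub: "subspace I" and Igr: "\<And>x. x\<in>I \<Longrightarrow> \<exists>a\<in>I \<inter> A0. \<exists>b\<in>I \<inter> A1. x = a + b"
    and IidL: "\<And>a x. x \<in> I \<Longrightarrow> mul a x \<in> I" and IidR: "\<And>a x. x \<in> I \<Longrightarrow> mul x a \<in> I"
    and Inz: "I \<noteq> {0}"
    using M by (auto simp: minimal_graded_ideal_def graded_ideal_in_def)
  have Badd: "\<And>x y z. B (x + y) z = B x z + B y z" "\<And>x y z. B x (y + z) = B x y + B x z"
    and Bass: "\<And>x y z. B (mul x y) z = B x (mul y z)"
    and nd1: "\<And>x. (\<forall>y. B x y = 0) \<Longrightarrow> x = 0" and nd2: "\<And>y. (\<forall>x. B x y = 0) \<Longrightarrow> y = 0"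
    using assms(3) unfolding homogeneous_symmetric_structure_def by (simp_all add: homogeneous_symmetric_structure_def)
  have B0: "B a 0 = 0" "B 0 a = 0" for a using Badd(2)[of a 0 0] Badd(1)[of 0 0 a] by simp_all
  show ?thesis
  proof (cases "\<exists>x\<in>I. \<exists>y\<in>I. mul x y \<noteq> 0")
    case True
    then obtain x0 y0 where xy0: "x0 \<in> I" "y0 \<in> I" "mul x0 y0 \<noteq> 0" by blast
    define G1 where "G1 = {mul x y | x y. x\<in>I \<and> y\<in>I}"
    have "span G1 = {0} \<or> span G1 = I"
    proof (rule min_use[OF M])
      show "G1 \<subseteq> I" using IidL unfolding G1_def by auto
    next
      fix g a assume "g \<in> G1"
      then obtain x y where g: "g = mul x y" "x \<in> I" "y \<in> I" unfolding G1_def by blast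
      show "mul a g \<in> span G1" unfolding g assoc[symmetric] G1_def
        by (rule span_base) (use g IidL in blast)
      show "mul g a \<in> span G1" unfolding g assoc G1_def
        by (rule span_base) (use g IidR in blast)
    next
      fix g assume "g \<in> G1"
      then obtain x y where g: "g = mul x y" "x \<in> I" "y \<in> I" unfolding G1_def by blast
      obtain x1 x2 where x: "x1 \<in> I \<inter> A0" "x2 \<in> I \<inter> A1" "x = x1 + x2" using Igr g by blast
      obtain y1 y2 where y: "y1 \<in> I \<inter> A0" "y2 \<in> I \<inter> A1" "y = y1 + y2" using Igr g by blast
      have m: "mul u v \<in> span (G1 \<inter> H)" if "u \<in> I" "v \<in> I" "u \<in> H" "v \<in> H" for u v
        using that hom_mul by (intro inGH) (auto simp: G1_def)
      show "g \<in> span (G1 \<inter> H)" unfolding g x y addL addR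
        using x y by (intro span_add m) auto
    qed
    moreover have "mul x0 y0 \<in> span G1" unfolding G1_def by (rule span_base) (use xy0 in blast)
    ultimately have I2: "span G1 = I" using xy0 by auto
    define G3 where "G3 = {mul (mul u y) v | u y v. u\<in>I \<and> y\<in>I \<and> v\<in>I}"
    have I3: "z \<in> span G3" if z: "z \<in> I" for z
    proof -
      have "z \<in> span G1" using z I2 by simp
      moreover have "span G1 \<subseteq> span G3"
      proof (rule span_minimal)
        show "G1 \<subseteq> span G3"
        proof
          fix g assume "g \<in> G1"
          then obtain x v where g: "g = mul x v" "x \<in> I" "v \<in> I" unfolding G1_def by blast
          have "x \<in> span G1" using g I2 by simp
          thus "g \<in> span G3" unfolding g
          proof (rule span_pre[of _ _ _ "\<lambda>x. mul x v"])
            fix h assume "h \<in> G1"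
            then obtain u y where "h = mul u y" "u \<in> I" "y \<in> I" unfolding G1_def by blast
            thus "mul h v \<in> span G3" unfolding G3_def by (intro span_base) (use g in blast)
          qed (auto simp: addL scL)
        qed
      qed simp
      ultimately show ?thesis by blast
    qed
    have "simple_sub scale mul A0 A1 I"
      unfolding simple_sub_def
    proof (intro conjI allI impI)
      show "\<exists>x\<in>I. \<exists>y\<in>I. mul x y \<noteq> 0" using True .
    next
      fix J assume J: "graded_ideal_in scale mul A0 A1 I J"
      have JI: "J \<subseteq> I" and Jsub: "subspace J"
        and Jgr: "\<And>x. x\<in>J \<Longrightarrow> \<exists>a\<in>J \<inter> A0. \<exists>b\<in>J \<inter> A1. x = a + b"
        and JL: "\<And>a x. a \<in> I \<Longrightarrow> x \<in> J \<Longrightarrow> mul a x \<in> J"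
        and JR: "\<And>a x. a \<in> I \<Longrightarrow> x \<in> J \<Longrightarrow> mul x a \<in> J"
        using J unfolding graded_ideal_in_def by auto
      define G4 where "G4 = {w. \<exists>j\<in>J. \<exists>a b. w = j \<or> w = mul a j \<or> w = mul j b \<or> w = mul (mul a j) b}"
      have inG4: "j \<in> G4" "mul a j \<in> G4" "mul j b \<in> G4" "mul (mul a j) b \<in> G4" if "j \<in> J" for j a b
        using that unfolding G4_def by blast+
      have "span G4 = {0} \<or> span G4 = I"
      proof (rule min_use[OF M])
        show "G4 \<subseteq> I" using JI IidL IidR unfolding G4_def by blast
      next
        fix g c assume "g \<in> G4"
        then obtain j a b where j: "j \<in> J" and
          g: "g = j \<or> g = mul a j \<or> g = mul j b \<or> g = mul (mul a j) b" unfolding G4_def by blast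
        show "mul c g \<in> span G4" using g
          by (elim disjE) (simp_all add: assoc[symmetric] span_base inG4 j)
        show "mul g c \<in> span G4" using g
          proof (elim disjE)
          qed (simp_all only: assoc[of j b c] assoc[of "mul a j" b c], simp_all add: span_base inG4 j)
      next
        fix g assume "g \<in> G4"
        then obtain j a b where j: "j \<in> J" and
          g: "g = j \<or> g = mul a j \<or> g = mul j b \<or> g = mul (mul a j) b" unfolding G4_def by blast
        obtain j1 j2 where jj: "j1 \<in> J \<inter> A0" "j2 \<in> J \<inter> A1" "j = j1 + j2" using Jgr j by blast
        obtain a1 a2 where aa: "a1 \<in> A0" "a2 \<in> A1" "a = a1 + a2" using dec by blast
        obtain b1 b2 where bb: "b1 \<in> A0" "b2 \<in> A1" "b = b1 + b2" using dec by blast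
        have aH: "a1 \<in> H" "a2 \<in> H" "b1 \<in> H" "b2 \<in> H" "j1 \<in> H" "j2 \<in> H" "j1 \<in> J" "j2 \<in> J"
          using aa bb jj by auto
        have t1: "j' \<in> span (G4 \<inter> H)" if "j' \<in> J" "j' \<in> H" for j'
          using that by (intro inGH inG4)
        have t2: "mul u j' \<in> span (G4 \<inter> H)" if "j' \<in> J" "j' \<in> H" "u \<in> H" for u j'
          using that by (intro inGH inG4 hom_mul)
        have t3: "mul j' u \<in> span (G4 \<inter> H)" if "j' \<in> J" "j' \<in> H" "u \<in> H" for u j'
          using that by (intro inGH inG4 hom_mul)
        have t4: "mul (mul v j') u \<in> span (G4 \<inter> H)" if "j' \<in> J" "j' \<in> H" "u \<in> H" "v \<in> H" for u v j'
          using that by (intro inGH inG4 hom_mul)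
        have c1: "j \<in> span (G4 \<inter> H)" unfolding jj(3)
          by (intro span_add t1 aH)
        have c2: "mul a j \<in> span (G4 \<inter> H)" unfolding jj(3) aa(3) addL addR
          by (intro span_add t2 aH)
        have c3: "mul j b \<in> span (G4 \<inter> H)" unfolding jj(3) bb(3) addL addR
          by (intro span_add t3 aH)
        have c4: "mul (mul a j) b \<in> span (G4 \<inter> H)" unfolding jj(3) aa(3) bb(3) addL addR
          by (intro span_add t4 aH)
        show "g \<in> span (G4 \<inter> H)" using g c1 c2 c3 c4 by blast
      qed
      thus "J = {0} \<or> J = I"
      proof
        assume "span G4 = {0}"
        hence "J \<subseteq> {0}" using inG4(1) span_base by blast
        thus ?thesis using Jsub subspace_0 by blast
      next
        assume I4: "span G4 = I"
        have "span G3 \<subseteq> J"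
        proof (rule span_minimal[OF _ Jsub], rule subsetI)
          fix g assume "g \<in> G3"
          then obtain u y v where g: "g = mul (mul u y) v" "u \<in> I" "y \<in> I" "v \<in> I"
            unfolding G3_def by blast
          have "y \<in> span G4" using I4 g by simp
          thus "g \<in> J" unfolding g(1)
          proof (rule span_pre[OF _ Jsub, where f = "\<lambda>y. mul (mul u y) v"])
            fix w assume "w \<in> G4"
            then obtain j a b where j: "j \<in> J" and
              w: "w = j \<or> w = mul a j \<or> w = mul j b \<or> w = mul (mul a j) b" unfolding G4_def by blast
            have e2: "mul (mul u (mul a j)) v = mul (mul (mul u a) j) v" by (simp add: assoc)
            have e3: "mul (mul u (mul j b)) v = mul (mul u j) (mul b v)" by (simp add: assoc)
            have e4: "mul (mul u (mul (mul a j) b)) v = mul (mul (mul u a) j) (mul b v)" by (simp add: assoc)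
            show "mul (mul u w) v \<in> J" using w
              by (elim disjE) (simp_all only: e2 e3 e4, (intro JL JR IidL IidR g j)+)
          qed (auto simp: addL addR scL scR)
        qed
        thus ?thesis using I3 JI by blast
      qed
    qed
    thus ?thesis by blast
  next
    case False
    hence I0: "\<forall>x\<in>I. \<forall>y\<in>I. mul x y = 0" by blast
    show ?thesis
    proof (cases "\<exists>a. \<exists>x\<in>I. mul a x \<noteq> 0")
      case True
      then obtain a0 x0 where ax0: "x0 \<in> I" "mul a0 x0 \<noteq> 0" by blast
      define GL where "GL = {mul a x | a x. x \<in> I}"
      define GR where "GR = {mul x a | a x. x \<in> I}"
      have "span GL = {0} \<or> span GL = I"
      proof (rule min_use[OF M])
        show "GL \<subseteq> I" using IidL unfolding GL_def by auto
      next
        fix g c assume "g \<in> GL"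
        then obtain a x where g: "g = mul a x" "x \<in> I" unfolding GL_def by blast
        show "mul c g \<in> span GL" unfolding g assoc[symmetric] GL_def
          by (rule span_base) (use g in blast)
        show "mul g c \<in> span GL" unfolding g assoc GL_def
          by (rule span_base) (use g IidR in blast)
      next
        fix g assume "g \<in> GL"
        then obtain x y where g: "g = mul x y" "y \<in> I" unfolding GL_def by blast
        obtain x1 x2 where x: "x1 \<in> A0" "x2 \<in> A1" "x = x1 + x2" using dec by blast
        obtain y1 y2 where y: "y1 \<in> I \<inter> A0" "y2 \<in> I \<inter> A1" "y = y1 + y2" using Igr g by blast
        have m: "mul u v \<in> span (GL \<inter> H)" if "v \<in> I" "u \<in> H" "v \<in> H" for u v
          using that hom_mul by (intro inGH) (auto simp: GL_def)
        show "g \<in> span (GL \<inter> H)" unfolding g x y addL addR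
          using x y by (intro span_add m) auto
      qed
      moreover have "mul a0 x0 \<in> span GL" unfolding GL_def by (rule span_base) (use ax0 in blast)
      ultimately have L: "span GL = I" using ax0 by auto
      have "\<exists>x\<in>I. \<exists>b. mul x b \<noteq> 0"
      proof (rule ccontr)
        assume "\<not> ?thesis"
        hence z: "\<forall>x\<in>I. \<forall>b. mul x b = 0" by blast
        have "mul a0 x0 = 0" by (rule nd1) (simp add: Bass z ax0 B0)
        thus False using ax0 by simp
      qed
      then obtain x1 b1 where xb1: "x1 \<in> I" "mul x1 b1 \<noteq> 0" by blast
      have "span GR = {0} \<or> span GR = I"
      proof (rule min_use[OF M])
        show "GR \<subseteq> I" using IidR unfolding GR_def by auto
      next
        fix g c assume "g \<in> GR"
        then obtain a x where g: "g = mul x a" "x \<in> I" unfolding GR_def by blast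
        show "mul c g \<in> span GR" unfolding g assoc[symmetric] GR_def
          by (rule span_base) (use g IidL in blast)
        show "mul g c \<in> span GR" unfolding g assoc GR_def
          by (rule span_base) (use g in blast)
      next
        fix g assume "g \<in> GR"
        then obtain x y where g: "g = mul y x" "y \<in> I" unfolding GR_def by blast
        obtain x1 x2 where x: "x1 \<in> A0" "x2 \<in> A1" "x = x1 + x2" using dec by blast
        obtain y1 y2 where y: "y1 \<in> I \<inter> A0" "y2 \<in> I \<inter> A1" "y = y1 + y2" using Igr g by blast
        have m: "mul v u \<in> span (GR \<inter> H)" if "v \<in> I" "u \<in> H" "v \<in> H" for u v
          using that hom_mul by (intro inGH) (auto simp: GR_def)
        show "g \<in> span (GR \<inter> H)" unfolding g x y addL addR
          using x y by (intro span_add m) auto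
      qed
      moreover have "mul x1 b1 \<in> span GR" unfolding GR_def by (rule span_base) (use xb1 in blast)
      ultimately have R: "span GR = I" using xb1 by auto
      show ?thesis using I0 L R unfolding GL_def GR_def by auto
    next
      case False
      hence zL: "\<forall>a. \<forall>x\<in>I. mul a x = 0" by blast
      have zR: "\<forall>x\<in>I. \<forall>b. mul x b = 0"
      proof (intro ballI allI)
        fix x b assume x: "x \<in> I"
        show "mul x b = 0" by (rule nd2) (simp add: Bass[symmetric] zL x B0)
      qed
      obtain z where z: "z \<in> I" "z \<noteq> 0" using Inz Isub subspace_0 by blast
      obtain p q where pq: "p \<in> I \<inter> A0" "q \<in> I \<inter> A1" "z = p + q" using Igr z by blast
      obtain x where x: "x \<in> I" "x \<in> H" "x \<noteq> 0" using pq z by (cases "p = 0") auto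
      have "span {x} = {0} \<or> span {x} = I"
      proof (rule min_use[OF M])
        show "{x} \<subseteq> I" using x by simp
      qed (use x zL zR span_zero in \<open>auto intro: span_base\<close>)
      moreover have "x \<in> span {x}" by (simp add: span_base)
      ultimately have "span {x} = I" using x by auto
      hence "I = range (\<lambda>c. scale c x)" by (simp add: span_singleton)
      moreover have "x \<in> annihilator mul" using zL zR x by (simp add: annihilator_def)
      ultimately show ?thesis using x by blast
    qed
  qed
qed

end
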